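(* Let $x,y$ be non-commuting indeterminates and $C=xyx^{-1}y^{-1}$. Let $(R_n)_{n\in\mathbb Z}$ satisfy $$R_{2n}CR_{2n-2}=1+R_{2n-1},\qquad R_{2n+1}CR_{2n-1}=1+R_{2n}^4\qquad(n\in\mathbb Z),$$ with $R_0=yxy^{-1}$ and $R_1=y$. Then for all $n\ge0$, $R_n$ is a Laurent polynomial in $x,y$ with only non-negative integer coefficients.
   Context: Work in the free skew field (non-commutative rational functions) over $\mathbb C$ generated by $x,y$. A Laurent polynomial in $x,y$ is a $\mathbb Z$-linear combination of words in $x^{\pm1},y^{\pm1}$. *)

theory Defs
  imports Main
begin

datatype gen = GX | GY

type_synonym letter = "gen \<times> bool"

definition eval_letter :: "'a::division_ring \<Rightarrow> 'a \<Rightarrow> letter \<Rightarrow> 'a" where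
  "eval_letter a b l = (let v = (case fst l of GX \<Rightarrow> a | GY \<Rightarrow> b)
                        in if snd l then inverse v else v)"

definition eval_word :: "'a::division_ring \<Rightarrow> 'a \<Rightarrow> letter list \<Rightarrow> 'a" where
  "eval_word a b w = prod_list (map (eval_letter a b) w)"

definition reduced :: "letter list \<Rightarrow> bool" where
  "reduced w = (\<forall>i. Suc i < length w \<longrightarrow>
      \<not> (fst (w ! i) = fst (w ! Suc i) \<and> snd (w ! i) \<noteq> snd (w ! Suc i)))"

text \<open>a, b are nonzero and the induced map from the integral group ring Z[F(x,y)]
  to the division ring is injective: distinct reduced words are Z-linearly
  independent.  This holds for x, y in the free skew field.\<close>
definition free_group_ring_embedding :: "'a::division_ring \<Rightarrow> 'a \<Rightarrow> bool" where
  "free_group_ring_embedding a b \<longleftrightarrow> a \<noteq> 0 \<and> b \<noteq> 0 \<and>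
     (\<forall>c :: letter list \<Rightarrow> int.
        finite {w. c w \<noteq> 0} \<longrightarrow> (\<forall>w. c w \<noteq> 0 \<longrightarrow> reduced w) \<longrightarrow>
        (\<Sum>w\<in>{w. c w \<noteq> 0}. of_int (c w) * eval_word a b w) = 0 \<longrightarrow>
        (\<forall>w. c w = 0))"

text \<open>r is (the image of) a Laurent polynomial in x, y with only non-negative
  integer coefficients: a finite sum of words, counted with multiplicity.\<close>
definition laurent_nonneg :: "'a::division_ring \<Rightarrow> 'a \<Rightarrow> 'a \<Rightarrow> bool" where
  "laurent_nonneg a b r \<longleftrightarrow> (\<exists>ws. r = sum_list (map (eval_word a b) ws))"

end

theory Submission
  imports Defs
begin
lemma step_alg:
  fixes a b c L C Ci :: "'a::ring_1"
  assumes c: "c = L*b - C*a"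
    and hq: "b*C*a - a*b - 1 + Ci = 0"
    and hj: "C*a*C*a + b*b - L*(b*C*a - 1) = 0"
    and hm: "L*b*C - b*L - C*a*C + a = 0"
    and hn: "L*a - C*a*L - b + C*b*C = 0"
    and CCi: "C*Ci = 1"
  shows "c*C*b - b*c - 1 + Ci = 0" "C*b*C*b + c*c - L*(c*C*b - 1) = 0"
    "L*c*C - c*L - C*b*C + b = 0" "L*b - C*b*L - c + C*c*C = 0"
    "(c*C*b - 1)*C*(b*C*a - 1) = 1 + b*b*b*b"
proof -
  have q2: "c*C*b - b*c - 1 + Ci = (L*b*C - b*L - C*a*C + a)*b + (b*C*a - a*b - 1 + Ci)"
    by (simp add: c algebra_simps)
  thus q2': "c*C*b - b*c - 1 + Ci = 0" using hm hq by simp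
  have "C*b*C*b + c*c - L*(c*C*b - 1) = (C*a*C*a + b*b - L*(b*C*a - 1)) + (L*a - C*a*L - b + C*b*C)*b
      - L*(c*C*b - b*c - 1 + Ci) + L*(b*C*a - a*b - 1 + Ci)"
    by (simp add: c algebra_simps)
  thus "C*b*C*b + c*c - L*(c*C*b - 1) = 0" using hj hn hq q2' by simp
  have "L*c*C - c*L - C*b*C + b = L*(L*b*C - b*L - C*a*C + a) - (L*a - C*a*L - b + C*b*C)"
    by (simp add: c algebra_simps)
  thus "L*c*C - c*L - C*b*C + b = 0" using hm hn by simp
  have "L*b - C*b*L - c + C*c*C = C*(L*b*C - b*L - C*a*C + a)"
    by (simp add: c algebra_simps)
  thus "L*b - C*b*L - c + C*c*C = 0" using hm by simp
  have CCi2: "C*(Ci*z) = z" for z using CCi by (simp add: mult.assoc[symmetric])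
  have "(c*C*b - 1)*C*(b*C*a - 1) - (1 + b*b*b*b) = - (C*a*C*a + b*b - L*(b*C*a - 1))*b*b
     + L*b*C*(b*C*a - a*b - 1 + Ci)*b + L*b*C*b*C*(b*C*a - a*b - 1 + Ci)
     - C*a*C*b*C*(b*C*a - a*b - 1 + Ci) - C*(b*C*a - a*b - 1 + Ci) - C*a*C*(b*C*a - a*b - 1 + Ci)*b"
    by (simp add: c algebra_simps CCi CCi2)
  thus "(c*C*b - 1)*C*(b*C*a - 1) = 1 + b*b*b*b" using hj hq by simp
qed

definition pos1 :: "'a::division_ring \<Rightarrow> 'a \<Rightarrow> 'a \<Rightarrow> bool" where
  "pos1 a b r \<longleftrightarrow> (\<exists>ws. ws \<noteq> [] \<and> r = sum_list (map (eval_word a b) ws))"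

lemma eval_word_append: "eval_word a b (u @ v) = eval_word a b u * eval_word a b v"
  by (simp add: eval_word_def)

lemma sum_list_prod:
  fixes f g :: "_ \<Rightarrow> 'a::semiring_0"
  shows "sum_list (map f xs) * sum_list (map g ys) = sum_list (map (\<lambda>(u,v). f u * g v) (concat (map (\<lambda>u. map (\<lambda>v. (u,v)) ys) xs)))"
  by (induction xs) (simp_all add: distrib_right sum_list_const_mult o_def)

lemma pos_add: "laurent_nonneg a b x \<Longrightarrow> laurent_nonneg a b y \<Longrightarrow> laurent_nonneg a b (x + y)"
  unfolding laurent_nonneg_def by (metis map_append sum_list_append)

lemma pos1_add1: "pos1 a b x \<Longrightarrow> laurent_nonneg a b y \<Longrightarrow> pos1 a b (x + y)"
  unfolding laurent_nonneg_def pos1_def by (metis append_is_Nil_conv map_append sum_list_append)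

lemma pos1_add2: "laurent_nonneg a b x \<Longrightarrow> pos1 a b y \<Longrightarrow> pos1 a b (x + y)"
  unfolding laurent_nonneg_def pos1_def by (metis append_is_Nil_conv map_append sum_list_append)

lemma pos1_pos: "pos1 a b x \<Longrightarrow> laurent_nonneg a b x"
  unfolding laurent_nonneg_def pos1_def by blast

lemma prod_words:
  "sum_list (map (eval_word a b) xs) * sum_list (map (eval_word a b) ys)
   = sum_list (map (eval_word a b) (concat (map (\<lambda>u. map (\<lambda>v. u @ v) ys) xs)))"
  by (induction xs) (simp_all add: distrib_right sum_list_const_mult o_def eval_word_append map_concat)

lemma pos_mult: "laurent_nonneg a b x \<Longrightarrow> laurent_nonneg a b y \<Longrightarrow> laurent_nonneg a b (x * y)"
  unfolding laurent_nonneg_def using prod_words by metis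

lemma pos1_mult: "pos1 a b x \<Longrightarrow> pos1 a b y \<Longrightarrow> pos1 a b (x * y)"
  unfolding pos1_def
proof (elim exE conjE)
  fix xs ys assume xs: "xs \<noteq> []" "x = sum_list (map (eval_word a b) xs)"
    and ys: "ys \<noteq> []" "y = sum_list (map (eval_word a b) ys)"
  have "concat (map (\<lambda>u. map (\<lambda>v. u @ v) ys) xs) \<noteq> []" using xs ys by (cases xs; cases ys) auto
  thus "\<exists>ws. ws \<noteq> [] \<and> x * y = sum_list (map (eval_word a b) ws)" using xs ys prod_words by metis
qed

lemma pos1_word: "pos1 a b (eval_word a b w)"
  unfolding pos1_def by (rule exI[of _ "[w]"]) simp

lemma pos1_one: "pos1 a b 1" using pos1_word[of a b "[]"] by (simp add: eval_word_def)
lemma pos1_a: "pos1 a b a" using pos1_word[of a b "[(GX,False)]"] by (simp add: eval_word_def eval_letter_def)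
lemma pos1_ai: "pos1 a b (inverse a)" using pos1_word[of a b "[(GX,True)]"] by (simp add: eval_word_def eval_letter_def)
lemma pos1_b: "pos1 a b b" using pos1_word[of a b "[(GY,False)]"] by (simp add: eval_word_def eval_letter_def)
lemma pos1_bi: "pos1 a b (inverse b)" using pos1_word[of a b "[(GY,True)]"] by (simp add: eval_word_def eval_letter_def)

definition cancels :: "letter \<Rightarrow> letter \<Rightarrow> bool" where
  "cancels l m \<longleftrightarrow> fst l = fst m \<and> snd l \<noteq> snd m"

fun push :: "letter \<Rightarrow> letter list \<Rightarrow> letter list" where
  "push l [] = [l]"
| "push l (m # r) = (if cancels l m then r else l # m # r)"

definition red :: "letter list \<Rightarrow> letter list" where "red w = foldr push w []"

lemma reduced_Cons: "reduced (l # w) \<longleftrightarrow> reduced w \<and> (w \<noteq> [] \<longrightarrow> \<not> cancels l (hd w))"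
proof
  assume r: "reduced (l # w)"
  have "reduced w" unfolding reduced_def
  proof (intro allI impI)
    fix i assume "Suc i < length w"
    thus "\<not> (fst (w ! i) = fst (w ! Suc i) \<and> snd (w ! i) \<noteq> snd (w ! Suc i))"
      using r[unfolded reduced_def, rule_format, of "Suc i"] by simp
  qed
  moreover have "w \<noteq> [] \<longrightarrow> \<not> cancels l (hd w)"
    using r[unfolded reduced_def, rule_format, of 0] by (cases w) (auto simp: cancels_def)
  ultimately show "reduced w \<and> (w \<noteq> [] \<longrightarrow> \<not> cancels l (hd w))" by blast
next
  assume r: "reduced w \<and> (w \<noteq> [] \<longrightarrow> \<not> cancels l (hd w))"
  show "reduced (l # w)" unfolding reduced_def
  proof (intro allI impI)
    fix i assume i: "Suc i < length (l # w)"
    show "\<not> (fst ((l # w) ! i) = fst ((l # w) ! Suc i) \<and> snd ((l # w) ! i) \<noteq> snd ((l # w) ! Suc i))"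
    proof (cases i)
      case 0
      have w: "w \<noteq> []" using i 0 by auto
      have "(l # w) ! Suc i = hd w" using 0 w by (simp add: hd_conv_nth)
      moreover have "(l # w) ! i = l" using 0 by simp
      ultimately show ?thesis using r w by (simp add: cancels_def)
    next
      case (Suc j) thus ?thesis using r i unfolding reduced_def by auto
    qed
  qed
qed

lemma reduced_Nil: "reduced []" by (simp add: reduced_def)
lemma reduced_push: "reduced w \<Longrightarrow> reduced (push l w)"
proof (cases w)
  case Nil thus ?thesis by (simp add: reduced_Cons reduced_Nil)
next
  case (Cons m r)
  assume "reduced w"
  thus ?thesis using Cons by (cases "cancels l m") (simp_all add: reduced_Cons)
qed

lemma reduced_red: "reduced (red w)"
  unfolding red_def by (induction w) (simp_all add: reduced_push reduced_Nil)
lemma eval_word_Cons: "eval_word a b (l # w) = eval_letter a b l * eval_word a b w"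
  by (simp add: eval_word_def)

lemma eval_push:
  assumes "a \<noteq> 0" "b \<noteq> 0"
  shows "eval_word a b (push l w) = eval_letter a b l * eval_word a b w"
proof (cases w)
  case Nil thus ?thesis by (simp add: eval_word_def)
next
  case (Cons m r)
  show ?thesis
  proof (cases "cancels l m")
    case True
    have "eval_letter a b l * eval_letter a b m = 1"
      using True assms by (cases l; cases m; auto simp: cancels_def eval_letter_def split: gen.splits)
    hence "eval_letter a b l * (eval_letter a b m * z) = z" for z by (simp add: mult.assoc[symmetric])
    thus ?thesis using True Cons by (simp add: eval_word_def)
  next
    case False thus ?thesis using Cons by (simp add: eval_word_def)
  qed
qed

lemma eval_red: assumes "a \<noteq> 0" "b \<noteq> 0" shows "eval_word a b (red w) = eval_word a b w"
  unfolding red_def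
proof (induction w)
  case Nil thus ?case by simp
next
  case (Cons l w) thus ?case by (simp add: eval_push[OF assms] eval_word_Cons)
qed

lemma sum_list_count:
  fixes f :: "_ \<Rightarrow> 'a::ring_1"
  assumes "finite S" "set xs \<subseteq> S"
  shows "sum_list (map f xs) = (\<Sum>y\<in>S. of_nat (count_list xs y) * f y)"
  using assms(2)
proof (induction xs)
  case Nil thus ?case by simp
next
  case (Cons x xs)
  have "(\<Sum>y\<in>S. of_nat (count_list (x # xs) y) * f y)
        = (\<Sum>y\<in>S. of_nat (count_list xs y) * f y) + (\<Sum>y\<in>S. (if x = y then f y else 0))"
    by (subst sum.distrib[symmetric]) (rule sum.cong, auto simp: distrib_right)
  also have "(\<Sum>y\<in>S. (if x = y then f y else 0)) = f x" using Cons.prems assms(1) by (simp add: sum.delta)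
  finally show ?case using Cons by simp
qed

lemma pos1_nonzero:
  assumes free: "free_group_ring_embedding a b" and p: "pos1 a b r"
  shows "r \<noteq> 0"
proof
  assume r0: "r = 0"
  from free have a0: "a \<noteq> 0" and b0: "b \<noteq> 0" by (auto simp: free_group_ring_embedding_def)
  from p obtain ws where ws: "ws \<noteq> []" "r = sum_list (map (eval_word a b) ws)" by (auto simp: pos1_def)
  define vs where "vs = map red ws"
  define c where "c u = int (count_list vs u)" for u
  have cset: "{u. c u \<noteq> 0} = set vs" by (auto simp: c_def count_list_0_iff)
  have "r = sum_list (map (eval_word a b) vs)" using ws a0 b0 by (simp add: vs_def o_def eval_red)
  also have "\<dots> = (\<Sum>u\<in>set vs. of_nat (count_list vs u) * eval_word a b u)"
    by (rule sum_list_count) auto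
  also have "\<dots> = (\<Sum>u\<in>{u. c u \<noteq> 0}. of_int (c u) * eval_word a b u)"
    by (rule sum.cong[OF cset[symmetric]]) (simp add: c_def)
  finally have s0: "(\<Sum>u\<in>{u. c u \<noteq> 0}. of_int (c u) * eval_word a b u) = 0" using r0 by simp
  have "\<forall>u. c u \<noteq> 0 \<longrightarrow> reduced u"
  proof (intro allI impI)
    fix u assume "c u \<noteq> 0"
    hence "u \<in> set vs" using cset by blast
    thus "reduced u" by (auto simp: vs_def reduced_red)
  qed
  moreover have "finite {u. c u \<noteq> 0}" unfolding cset by simp
  ultimately have "\<forall>u. c u = 0" using free s0 unfolding free_group_ring_embedding_def by blast
  moreover have "hd vs \<in> set vs" using ws by (cases ws) (simp_all add: vs_def)
  ultimately show False using cset by blast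
qed
locale nc2 = fixes a b :: "'a::division_ring" assumes a0: "a \<noteq> 0" and b0: "b \<noteq> 0"
begin
lemma inv_simps[simp]: "a * inverse a = 1" "inverse a * a = 1" "b * inverse b = 1" "inverse b * b = 1"
  "a * (inverse a * z) = z" "inverse a * (a * z) = z" "b * (inverse b * z) = z" "inverse b * (b * z) = z"
  using a0 b0 by (simp_all add: mult.assoc[symmetric])
definition "C = a*b*inverse a*inverse b"
definition "Ci = b*a*inverse b*inverse a"
definition "A = a*a*inverse b"
definition "B = (1+b)*inverse a*(1+b)*inverse a*inverse b"
definition "L = A + B"
definition "A' = a*a*a*inverse b*inverse a"
definition "B' = (1+b)*inverse a*inverse b*(1+b)*inverse a"
definition "D = A*B - C"
definition "D' = B'*A' - Ci"
fun E :: "nat \<Rightarrow> 'a" where "E 0 = b*a*inverse b" | "E (Suc 0) = (1+b)*inverse a" | "E (Suc (Suc n)) = L*E(Suc n) - C*E n"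
definition "G n = A*E(Suc n) - C*E n"
definition "G' n = E(Suc n)*A' - E n*Ci"
definition "Qq n = G n*C*E(Suc n) - 1"
definition "Od n = E(Suc n)*C*E n - 1"

lemma CCi: "C*Ci = 1" "Ci*C = 1" by (simp_all add: C_def Ci_def algebra_simps)
lemma D_eq: "D = a*a*inverse b*inverse a*inverse a*inverse b + a*a*inverse b*inverse a*b*inverse a*inverse b + inverse b"
  by (simp add: D_def A_def B_def C_def algebra_simps)
lemma D'_eq: "D' = a*inverse b*inverse a + inverse a*inverse b*a*a*inverse b*inverse a + b*inverse a*inverse b*a*a*inverse b*inverse a"
  by (simp add: D'_def A'_def B'_def Ci_def algebra_simps)
lemma AB'_eq: "A*B' - 1 = a*a*inverse b*inverse a*inverse a + a*a*inverse b*inverse a*inverse b*inverse a + a*inverse b*inverse a"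
  by (simp add: A_def B'_def algebra_simps)
lemma LCi: "L*Ci = A' + B'"
  by (simp add: L_def A_def B_def A'_def B'_def Ci_def algebra_simps)
lemma G0: "G 0 = a*a*inverse b*inverse a" by (simp add: G_def A_def C_def algebra_simps)
lemma G'0: "G' 0 = a*a*inverse b*inverse a" by (simp add: G'_def A'_def Ci_def algebra_simps)
lemma Qq0: "Qq 0 = a*inverse b*inverse a" by (simp add: Qq_def G0 C_def algebra_simps)
lemma O0: "Od 0 = b" by (simp add: Od_def C_def algebra_simps)

lemma inv_base:
  "E 1*C*E 0 - E 0*E 1 - 1 + Ci = 0"
  "C*E 0*C*E 0 + E 1*E 1 - L*(E 1*C*E 0 - 1) = 0"
  "L*E 1*C - E 1*L - C*E 0*C + E 0 = 0"
  "L*E 0 - C*E 0*L - E 1 + C*E 1*C = 0"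
  by (simp_all add: C_def Ci_def L_def A_def B_def algebra_simps)
lemma inv_all:
  "E (Suc n)*C*E n - E n*E (Suc n) - 1 + Ci = 0 \<and>
   C*E n*C*E n + E (Suc n)*E (Suc n) - L*(E (Suc n)*C*E n - 1) = 0 \<and>
   L*E (Suc n)*C - E (Suc n)*L - C*E n*C + E n = 0 \<and>
   L*E n - C*E n*L - E (Suc n) + C*E (Suc n)*C = 0"
proof (induction n)
  case 0 thus ?case using inv_base by simp
next
  case (Suc n)
  have c: "E (Suc (Suc n)) = L*E (Suc n) - C*E n" by simp
  from step_alg[OF c _ _ _ _ CCi(1)] Suc show ?case by blast
qed

lemma odd_id: "Od (Suc n)*C*Od n = 1 + E (Suc n)^4"
proof -
  have c: "E (Suc (Suc n)) = L*E (Suc n) - C*E n" by simp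
  have "CCi": "C*Ci = 1" by (rule CCi)
  from step_alg(5)[OF c _ _ _ _ CCi] inv_all[of n]
  show ?thesis by (simp add: Od_def power4_eq_xxxx)
qed

lemma right_rec: "E (Suc (Suc n)) = E (Suc n)*B' + G' n"
proof -
  have m: "L*E (Suc n)*C - E (Suc n)*L - C*E n*C + E n = 0" using inv_all[of n] by blast
  have "E (Suc (Suc n))*C = E (Suc n)*L - E n"
  proof -
    have "E (Suc (Suc n))*C = (E (Suc n)*L - E n) + (L*E (Suc n)*C - E (Suc n)*L - C*E n*C + E n)"
      by (simp add: algebra_simps)
    thus ?thesis using m by simp
  qed
  hence "E (Suc (Suc n)) = (E (Suc n)*L - E n)*Ci"
    by (metis CCi(1) mult.assoc mult.right_neutral)
  also have "\<dots> = E (Suc n)*(L*Ci) - E n*Ci" by (simp add: algebra_simps)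
  also have "\<dots> = E (Suc n)*B' + G' n" by (simp add: LCi G'_def algebra_simps)
  finally show ?thesis .
qed

lemma left_rec: "E (Suc (Suc n)) = B*E (Suc n) + G n"
  by (simp add: G_def L_def algebra_simps)

lemma G_rec: "G (Suc n) = A*G n + D*E (Suc n)"
  by (simp add: G_def D_def L_def algebra_simps)

lemma G'_rec: "G' (Suc n) = G' n*A' + E (Suc n)*D'"
proof -
  have h: "E (Suc (Suc n)) = E (Suc n)*A' + E (Suc n)*B' - E n*Ci" using right_rec[of n] by (simp add: G'_def algebra_simps del: E.simps)
  show ?thesis by (simp only: G'_def h) (simp add: D'_def algebra_simps del: E.simps)
qed

lemma Qq_rec: "Qq (Suc n) = A*Qq n*B' + (A*B' - 1) + A*G n*C*G' n + D*E (Suc n)*C*E (Suc n)*B' + D*E (Suc n)*C*G' n"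
proof -
  have "Qq (Suc n) = (A*G n + D*E (Suc n))*C*(E (Suc n)*B' + G' n) - 1"
    unfolding Qq_def G_rec right_rec[symmetric] ..
  also have "\<dots> = A*Qq n*B' + (A*B' - 1) + A*G n*C*G' n + D*E (Suc n)*C*E (Suc n)*B' + D*E (Suc n)*C*G' n"
    by (simp add: Qq_def algebra_simps)
  finally show ?thesis .
qed

lemma Od_Suc: "Od (Suc n) = B*E (Suc n)*C*E (Suc n) + Qq n"
  by (simp add: Od_def Qq_def left_rec[of n] algebra_simps del: E.simps)

end
context nc2 begin
lemma pos1_1b: "pos1 a b (1 + b)" by (rule pos1_add1[OF pos1_one pos1_pos[OF pos1_b]])

lemmas posI = pos1_add1 pos1_mult pos1_pos pos1_1b pos1_one pos1_a pos1_ai pos1_b pos1_bi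

lemma pos_C: "pos1 a b C" unfolding C_def by (intro posI)
lemma pos_A: "pos1 a b A" unfolding A_def by (intro posI)
lemma pos_B: "pos1 a b B" unfolding B_def by (intro posI)
lemma pos_A': "pos1 a b A'" unfolding A'_def by (intro posI)
lemma pos_B': "pos1 a b B'" unfolding B'_def by (intro posI)
lemma pos_D: "pos1 a b D" unfolding D_eq by (intro posI)
lemma pos_D': "pos1 a b D'" unfolding D'_eq by (intro posI)
lemma pos_AB': "pos1 a b (A*B' - 1)" unfolding AB'_eq by (intro posI)

lemma pos_main: "pos1 a b (E (Suc n)) \<and> laurent_nonneg a b (G n) \<and> laurent_nonneg a b (G' n) \<and> laurent_nonneg a b (Qq n)"
proof (induction n)
  case 0
  show ?case unfolding G0 G'0 Qq0 E.simps by (intro conjI posI)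
next
  case (Suc n)
  hence e: "pos1 a b (E (Suc n))" and g: "laurent_nonneg a b (G n)" and g': "laurent_nonneg a b (G' n)"
    and q: "laurent_nonneg a b (Qq n)" by auto
  note P = pos1_pos[OF e] pos1_pos[OF pos_A] pos1_pos[OF pos_D] pos1_pos[OF pos_A'] pos1_pos[OF pos_D']
    pos1_pos[OF pos_B'] pos1_pos[OF pos_C] pos1_pos[OF pos_AB'] g g' q
  have "pos1 a b (E (Suc (Suc n)))" unfolding left_rec using e g pos_B by (intro pos1_add1 pos1_mult)
  moreover have "laurent_nonneg a b (G (Suc n))" unfolding G_rec
    by (intro pos_add pos_mult P)
  moreover have "laurent_nonneg a b (G' (Suc n))" unfolding G'_rec
    by (intro pos_add pos_mult P)
  moreover have "laurent_nonneg a b (Qq (Suc n))" unfolding Qq_rec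
    by (intro pos_add pos_mult P)
  ultimately show ?case by blast
qed

lemma pos_E: "pos1 a b (E n)"
proof (cases n)
  case 0 thus ?thesis by (simp del: E.simps) (simp, intro posI)
next
  case (Suc m) thus ?thesis using pos_main by blast
qed

lemma pos_Od: "pos1 a b (Od n)"
proof (cases n)
  case 0 thus ?thesis using O0 pos1_b by simp
next
  case (Suc m)
  have e: "pos1 a b (E (Suc m))" and q: "laurent_nonneg a b (Qq m)" using pos_main[of m] by auto
  show ?thesis unfolding Suc Od_Suc by (intro pos1_add1 pos1_mult e q pos_B pos_C)
qed
end

theorem theorem4p8:
  fixes a b :: "'a::division_ring" and R :: "int \<Rightarrow> 'a"
  assumes free: "free_group_ring_embedding a b"
    and rec_even: "\<forall>n::int. R (2*n) * (a * b * inverse a * inverse b) * R (2*n - 2) = 1 + R (2*n - 1)"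
    and rec_odd: "\<forall>n::int. R (2*n + 1) * (a * b * inverse a * inverse b) * R (2*n - 1) = 1 + R (2*n) ^ 4"
    and R0: "R 0 = b * a * inverse b"
    and R1: "R 1 = b"
  shows "\<forall>n::int. n \<ge> 0 \<longrightarrow> laurent_nonneg a b (R n)"
proof -
  interpret nc2 a b using free by unfold_locales (auto simp: free_group_ring_embedding_def)
  have Ceq: "a * b * inverse a * inverse b = C" by (simp add: C_def)
  have nzE: "C * E n \<noteq> 0" for n
    using pos1_nonzero[OF free pos_C] pos1_nonzero[OF free pos_E] by simp
  have nzO: "C * Od n \<noteq> 0" for n
    using pos1_nonzero[OF free pos_C] pos1_nonzero[OF free pos_Od] by simp
  have main: "R (int (2*n)) = E n \<and> R (int (2*n+1)) = Od n" for n
  proof (induction n)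
    case 0 thus ?case using R0 R1 O0 by simp
  next
    case (Suc n)
    have i1: "2*(int n+1) = int (2*Suc n)" "2*(int n+1) - 2 = int (2*n)" "2*(int n+1) - 1 = int (2*n+1)"
      "2*(int n+1) + 1 = int (2*Suc n+1)" by simp_all
    have "R (int (2*Suc n)) * C * E n = 1 + Od n"
      using rec_even[rule_format, of "int n + 1"] Suc unfolding Ceq i1 by simp
    also have "\<dots> = E (Suc n) * C * E n" by (simp add: Od_def)
    finally have "R (int (2*Suc n)) * (C * E n) = E (Suc n) * (C * E n)" by (simp add: mult.assoc)
    hence e: "R (int (2*Suc n)) = E (Suc n)" using nzE by simp
    have "R (int (2*Suc n+1)) * C * Od n = 1 + E (Suc n) ^ 4"
      using rec_odd[rule_format, of "int n + 1"] Suc e unfolding Ceq i1 by simp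
    also have "\<dots> = Od (Suc n) * C * Od n" by (simp add: odd_id)
    finally have "R (int (2*Suc n+1)) * (C * Od n) = Od (Suc n) * (C * Od n)" by (simp add: mult.assoc)
    hence "R (int (2*Suc n+1)) = Od (Suc n)" using nzO by simp
    with e show ?case by simp
  qed
  show ?thesis
  proof (intro allI impI)
    fix n :: int assume "n \<ge> 0"
    then obtain m where m: "n = int m" by (metis nonneg_eq_int)
    obtain k where "m = 2*k \<or> m = 2*k+1" by (metis oddE evenE)
    thus "laurent_nonneg a b (R n)"
      using main[of k] pos_E[of k] pos_Od[of k] pos1_pos m by auto
  qed
qed
end
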